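(* (Optimality within horizon.) Given a start location (product-graph state) $l_0$ of the robot at current time $t_0$ and a horizon length $H$, the plan generated by $\textsf{DT*}$ is optimal in terms of the number of cycles completed within the horizon: among all decision sequences consisting of shortest prefix paths and shortest suffix cycles in the reduced product graph starting at $l_0$ at time $t_0$ (with time-dependent edge costs reflecting the known dynamic obstacles), none completes more suffix cycles in the time interval $[t_0,t_0+H]$ than the generated plan.
   Context: Setting: a robot moves in a 2D grid modelled by a weighted transition system $T$ (cells, obstacle cells, moves left/right/up/down with positive time costs, atomic propositions labelling cells); an LTL task $\phi$ has B\"uchi automaton $B_\phi$ with accepting states $F$; the product graph of $T$ and $B_\phi$ is reduced to a graph $G_r=(V_r,v_0,E_r,F_r,w_r)$, $V_r\subseteq S_T\times S_B$, $F_r$ the nodes whose automaton component is in $F$, where edges represent shortest paths in the product graph. Dynamic obstacles make some cells unavailable for known time intervals, so edge costs are time-dependent (including waiting). From a node $l_i$ at time $t_i$ the available decisions are: traverse a shortest prefix path to some destination node $l_j\in F_r$, arriving at time $t_j$; or, if $l_i\in F_r$, traverse a shortest cycle from $l_i$ back to $l_i$, arriving at $t_j$ (this completes a cycle). $\textsf{DT*}$ encodes all such decision sequences starting at $l_0$ at time $t_0$ within the horizon $[t_0,t_0+H]$ as SMT constraints (Boolean variables $X_{l t}$ for being at $l$ at time $t$, exactly one successor decision per visited node, at most one location per time, no decision at intermediate times of an ongoing traversal) and asks the solver to lexicographically maximize the number of completed cycles, then minimize the length of the last completed cycle, then minimize the completion time of the last cycle. *)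

theory Defs
  imports Main
begin

text \<open>Abstract model of the reduced product graph G_r = (V_r, v_0, E_r, F_r, w_r)
  with time-dependent traversal times.
  A decision at a node l at time t is either a shortest prefix path to a
  destination node l' in F_r, or (if l is in F_r) a shortest suffix cycle
  from l back to l.\<close>

datatype 'v decision = Prefix 'v | Cycle

fun target :: "'v \<Rightarrow> 'v decision \<Rightarrow> 'v" where
  "target l (Prefix l') = l'"
| "target l Cycle = l"

fun is_cycle :: "'v decision \<Rightarrow> bool" where
  "is_cycle (Prefix _) = False"
| "is_cycle Cycle = True"

fun available :: "'v set \<Rightarrow> 'v \<Rightarrow> 'v decision \<Rightarrow> bool" where
  "available F l (Prefix l') = (l' \<in> F)"
| "available F l Cycle = (l \<in> F)"

text \<open>arr l t d = Some t' : executing decision d from node l at time t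
  (shortest path in the product graph under the known dynamic obstacles,
  waiting included) arrives at time t'; None if impossible.\<close>
type_synonym 'v arrival = "'v \<Rightarrow> nat \<Rightarrow> 'v decision \<Rightarrow> nat option"

fun valid_seq :: "'v set \<Rightarrow> 'v arrival \<Rightarrow> nat \<Rightarrow> 'v \<Rightarrow> nat \<Rightarrow> 'v decision list \<Rightarrow> bool" where
  "valid_seq F arr tend l t [] = True"
| "valid_seq F arr tend l t (d # ds) =
     (available F l d \<and>
      (\<exists>t'. arr l t d = Some t' \<and> t' \<le> tend \<and> valid_seq F arr tend (target l d) t' ds))"

definition num_cycles :: "'v decision list \<Rightarrow> nat" where
  "num_cycles ds = length (filter is_cycle ds)"

text \<open>The SMT encoding of DT*: Boolean variables X l t (robot at node l at
  time t) and D l t d (decision d taken at node l at time t).\<close>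
definition dt_model ::
  "'v set \<Rightarrow> 'v set \<Rightarrow> 'v arrival \<Rightarrow> 'v \<Rightarrow> nat \<Rightarrow> nat
   \<Rightarrow> ('v \<Rightarrow> nat \<Rightarrow> bool) \<Rightarrow> ('v \<Rightarrow> nat \<Rightarrow> 'v decision \<Rightarrow> bool) \<Rightarrow> bool" where
  "dt_model V F arr l0 t0 H X D \<longleftrightarrow>
     X l0 t0
   \<and> (\<forall>l t. X l t \<longrightarrow> l \<in> V \<and> t0 \<le> t \<and> t \<le> t0 + H)
   \<comment> \<open>at most one location per time\<close>
   \<and> (\<forall>l l' t. X l t \<and> X l' t \<longrightarrow> l = l')
   \<comment> \<open>a decision is taken only at a visited node, is available, and leads
       within the horizon to the visited destination\<close>
   \<and> (\<forall>l t d. D l t d \<longrightarrow> X l t \<and> available F l d \<and>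
        (\<exists>t'. arr l t d = Some t' \<and> t' \<le> t0 + H \<and> X (target l d) t'))
   \<comment> \<open>at most one successor decision per visited node\<close>
   \<and> (\<forall>l t d d'. D l t d \<and> D l t d' \<longrightarrow> d = d')
   \<comment> \<open>every visited node except the final one has a successor decision\<close>
   \<and> (\<forall>l t. X l t \<and> (\<exists>l' t'. t < t' \<and> X l' t') \<longrightarrow> (\<exists>d. D l t d))
   \<comment> \<open>no location is occupied at intermediate times of an ongoing traversal\<close>
   \<and> (\<forall>l t d t' l' s. D l t d \<and> arr l t d = Some t' \<and> t < s \<and> s < t' \<longrightarrow> \<not> X l' s)"

definition model_cycles :: "('v \<Rightarrow> nat \<Rightarrow> 'v decision \<Rightarrow> bool) \<Rightarrow> nat" where
  "model_cycles D = card {(l, t). D l t Cycle}"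

definition last_cycle_start :: "('v \<Rightarrow> nat \<Rightarrow> 'v decision \<Rightarrow> bool) \<Rightarrow> nat" where
  "last_cycle_start D = (if \<exists>l t. D l t Cycle then Max {t. \<exists>l. D l t Cycle} else 0)"

definition last_cycle_end :: "'v arrival \<Rightarrow> ('v \<Rightarrow> nat \<Rightarrow> 'v decision \<Rightarrow> bool) \<Rightarrow> nat" where
  "last_cycle_end arr D = (if \<exists>l t. D l t Cycle then
      the (arr (THE l. D l (last_cycle_start D) Cycle) (last_cycle_start D) Cycle) else 0)"

definition last_cycle_length :: "'v arrival \<Rightarrow> ('v \<Rightarrow> nat \<Rightarrow> 'v decision \<Rightarrow> bool) \<Rightarrow> nat" where
  "last_cycle_length arr D = last_cycle_end arr D - last_cycle_start D"

definition lex_better_eq ::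
  "'v arrival \<Rightarrow> ('v \<Rightarrow> nat \<Rightarrow> 'v decision \<Rightarrow> bool) \<Rightarrow> ('v \<Rightarrow> nat \<Rightarrow> 'v decision \<Rightarrow> bool) \<Rightarrow> bool" where
  "lex_better_eq arr D D' \<longleftrightarrow>
     model_cycles D > model_cycles D'
   \<or> (model_cycles D = model_cycles D' \<and>
       (last_cycle_length arr D < last_cycle_length arr D'
        \<or> (last_cycle_length arr D = last_cycle_length arr D' \<and>
            last_cycle_end arr D \<le> last_cycle_end arr D')))"

definition dtstar_plan ::
  "'v set \<Rightarrow> 'v set \<Rightarrow> 'v arrival \<Rightarrow> 'v \<Rightarrow> nat \<Rightarrow> nat
   \<Rightarrow> ('v \<Rightarrow> nat \<Rightarrow> bool) \<Rightarrow> ('v \<Rightarrow> nat \<Rightarrow> 'v decision \<Rightarrow> bool) \<Rightarrow> bool" where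
  "dtstar_plan V F arr l0 t0 H X D \<longleftrightarrow>
     dt_model V F arr l0 t0 H X D \<and>
     (\<forall>X' D'. dt_model V F arr l0 t0 H X' D' \<longrightarrow> lex_better_eq arr D D')"

end

theory Submission
  imports Defs
begin

definition seg :: "'v set \<Rightarrow> 'v set \<Rightarrow> 'v arrival \<Rightarrow> 'v \<Rightarrow> nat \<Rightarrow> nat
   \<Rightarrow> ('v \<Rightarrow> nat \<Rightarrow> bool) \<Rightarrow> ('v \<Rightarrow> nat \<Rightarrow> 'v decision \<Rightarrow> bool) \<Rightarrow> bool" where
  "seg V F arr l0 t0 tend X D \<longleftrightarrow>
     X l0 t0
   \<and> (\<forall>l t. X l t \<longrightarrow> l \<in> V \<and> t0 \<le> t \<and> t \<le> tend)
   \<and> (\<forall>l l' t. X l t \<and> X l' t \<longrightarrow> l = l')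
   \<and> (\<forall>l t d. D l t d \<longrightarrow> X l t \<and> available F l d \<and>
        (\<exists>t'. arr l t d = Some t' \<and> t' \<le> tend \<and> X (target l d) t'))
   \<and> (\<forall>l t d d'. D l t d \<and> D l t d' \<longrightarrow> d = d')
   \<and> (\<forall>l t. X l t \<and> (\<exists>l' t'. t < t' \<and> X l' t') \<longrightarrow> (\<exists>d. D l t d))
   \<and> (\<forall>l t d t' l' s. D l t d \<and> arr l t d = Some t' \<and> t < s \<and> s < t' \<longrightarrow> \<not> X l' s)"

lemma segI:
  assumes "X l0 t0"
    and "\<And>l t. X l t \<Longrightarrow> l \<in> V \<and> t0 \<le> t \<and> t \<le> tend"
    and "\<And>l l' t. X l t \<and> X l' t \<Longrightarrow> l = l'"
    and "\<And>l t d. D l t d \<Longrightarrow> X l t \<and> available F l d \<and>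
        (\<exists>t'. arr l t d = Some t' \<and> t' \<le> tend \<and> X (target l d) t')"
    and "\<And>l t d d'. D l t d \<and> D l t d' \<Longrightarrow> d = d'"
    and "\<And>l t. X l t \<and> (\<exists>l' t'. t < t' \<and> X l' t') \<Longrightarrow> (\<exists>d. D l t d)"
    and "\<And>l t d t' l' s. D l t d \<and> arr l t d = Some t' \<and> t < s \<and> s < t' \<Longrightarrow> \<not> X l' s"
  shows "seg V F arr l0 t0 tend X D"
  unfolding seg_def
  apply (rule conjI, fact assms(1))
  apply (rule conjI, intro allI impI, erule assms(2))
  apply (rule conjI, intro allI impI, erule assms(3))
  apply (rule conjI, intro allI impI, erule assms(4))
  apply (rule conjI, intro allI impI, erule assms(5))
  apply (rule conjI, intro allI impI, erule assms(6))
  apply (intro allI impI, erule assms(7))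
  done

lemma seg_exists:
  assumes inc: "\<And>l t d t'. arr l t d = Some t' \<Longrightarrow> t < t'"
    and tv: "\<And>l t d t'. l \<in> V \<Longrightarrow> available F l d \<Longrightarrow> arr l t d = Some t' \<Longrightarrow> target l d \<in> V"
  shows "valid_seq F arr tend l t ds \<Longrightarrow> l \<in> V \<Longrightarrow> t \<le> tend \<Longrightarrow>
    \<exists>X D. seg V F arr l t tend X D \<and> finite {(l, t). D l t Cycle}
       \<and> card {(l, t). D l t Cycle} = num_cycles ds"
proof (induction ds arbitrary: l t)
  case Nil
  show ?case
    by (rule exI[of _ "\<lambda>l' s. l' = l \<and> s = t"], rule exI[of _ "\<lambda>_ _ _. False"])
       (use Nil in \<open>auto simp: seg_def num_cycles_def\<close>)
next
  case (Cons d ds)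
  from Cons.prems obtain t' where av: "available F l d" and a: "arr l t d = Some t'"
    and t'e: "t' \<le> tend" and vs: "valid_seq F arr tend (target l d) t' ds" by auto
  have tt': "t < t'" using inc a by blast
  have tV: "target l d \<in> V" using tv Cons.prems(2) av a by blast
  from Cons.IH[OF vs tV t'e] obtain X D where s: "seg V F arr (target l d) t' tend X D"
    and fin: "finite {(l, t). D l t Cycle}" and cd: "card {(l, t). D l t Cycle} = num_cycles ds"
    by blast
  define X' where "X' = (\<lambda>l' s. (l' = l \<and> s = t) \<or> X l' s)"
  define D' where "D' = (\<lambda>l' s e. (l' = l \<and> s = t \<and> e = d) \<or> D l' s e)"
  have sX: "X (target l d) t'" using s unfolding seg_def by (elim conjE) assumption
  have sB: "\<forall>l t. X l t \<longrightarrow> l \<in> V \<and> t' \<le> t \<and> t \<le> tend"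
    using s unfolding seg_def by (elim conjE) assumption
  have sU: "\<forall>l l' t. X l t \<and> X l' t \<longrightarrow> l = l'"
    using s unfolding seg_def by (elim conjE) assumption
  have sD: "\<forall>l t d. D l t d \<longrightarrow> X l t \<and> available F l d \<and>
        (\<exists>t'. arr l t d = Some t' \<and> t' \<le> tend \<and> X (target l d) t')"
    using s unfolding seg_def by (elim conjE) assumption
  have sDU: "\<forall>l t d d'. D l t d \<and> D l t d' \<longrightarrow> d = d'"
    using s unfolding seg_def by (elim conjE) assumption
  have sS: "\<forall>l t. X l t \<and> (\<exists>l' t'. t < t' \<and> X l' t') \<longrightarrow> (\<exists>d. D l t d)"
    using s unfolding seg_def by (elim conjE) assumption
  have sI: "\<forall>l t d t' l' s. D l t d \<and> arr l t d = Some t' \<and> t < s \<and> s < t' \<longrightarrow> \<not> X l' s"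
    using s unfolding seg_def by (elim conjE) assumption
  have old: "X l' s \<Longrightarrow> t' \<le> s" for l' s using sB by blast
  have oldD: "D l' s e \<Longrightarrow> t' \<le> s" for l' s e
  proof -
    assume "D l' s e"
    hence "X l' s" using sD by blast
    thus ?thesis using old by blast
  qed
  have "seg V F arr l t tend X' D'"
  proof (rule segI)
    show "X' l t" by (simp add: X'_def)
  next
    fix l1 t1 assume h: "X' l1 t1"
    show "l1 \<in> V \<and> t \<le> t1 \<and> t1 \<le> tend"
    proof (cases "l1 = l \<and> t1 = t")
      case True thus ?thesis using tt' t'e Cons.prems(2) by auto
    next
      case False hence "X l1 t1" using h X'_def by auto
      thus ?thesis using sB tt' by fastforce
    qed
  next
    fix l1 l2 t1 assume h: "X' l1 t1 \<and> X' l2 t1"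
    show "l1 = l2"
    proof (cases "t1 = t")
      case True
      hence "\<not> X l1 t1" "\<not> X l2 t1" using old tt' by (auto simp: not_le[symmetric])
      thus ?thesis using h X'_def by auto
    next
      case False
      hence "X l1 t1" "X l2 t1" using h X'_def by auto
      thus ?thesis using sU by blast
    qed
  next
    fix l1 t1 e assume h: "D' l1 t1 e"
    show "X' l1 t1 \<and> available F l1 e \<and> (\<exists>t'. arr l1 t1 e = Some t' \<and> t' \<le> tend \<and> X' (target l1 e) t')"
    proof (cases "l1 = l \<and> t1 = t \<and> e = d")
      case True thus ?thesis using av a t'e sX unfolding X'_def by auto
    next
      case False hence "D l1 t1 e" using h D'_def by auto
      thus ?thesis using sD unfolding X'_def by blast
    qed
  next
    fix l1 t1 e e' assume h: "D' l1 t1 e \<and> D' l1 t1 e'"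
    show "e = e'"
    proof (cases "t1 = t")
      case True
      hence "\<not> D l1 t1 e" "\<not> D l1 t1 e'" using oldD tt' by (auto simp: not_le[symmetric])
      thus ?thesis using h D'_def by auto
    next
      case False
      hence "D l1 t1 e" "D l1 t1 e'" using h D'_def by auto
      thus ?thesis using sDU by blast
    qed
  next
    fix l1 t1 assume h: "X' l1 t1 \<and> (\<exists>l' t'. t1 < t' \<and> X' l' t')"
    show "\<exists>e. D' l1 t1 e"
    proof (cases "l1 = l \<and> t1 = t")
      case True thus ?thesis by (auto simp: D'_def)
    next
      case False
      then have x: "X l1 t1" using h X'_def by auto
      from h obtain l2 t2 where "t1 < t2" "X' l2 t2" by blast
      moreover have "t < t2" using old[OF x] tt' \<open>t1 < t2\<close> by linarith
      ultimately have "X l2 t2" using X'_def by auto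
      hence "\<exists>e. D l1 t1 e" using sS x \<open>t1 < t2\<close> by blast
      thus ?thesis by (auto simp: D'_def)
    qed
  next
    fix l1 t1 e t2 l2 s1 assume h: "D' l1 t1 e \<and> arr l1 t1 e = Some t2 \<and> t1 < s1 \<and> s1 < t2"
    show "\<not> X' l2 s1"
    proof (cases "l1 = l \<and> t1 = t \<and> e = d")
      case True
      hence "t2 = t'" using h a by simp
      hence "\<not> X l2 s1" using h old by (auto simp: not_le[symmetric])
      thus ?thesis using h True unfolding X'_def by auto
    next
      case False
      hence d1: "D l1 t1 e" using h D'_def by auto
      hence "t' \<le> t1" using oldD by blast
      hence "s1 \<noteq> t" using h tt' by linarith
      moreover have "\<not> X l2 s1" using sI d1 h by blast
      ultimately show ?thesis unfolding X'_def by auto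
    qed
  qed
  moreover
  have eq: "{(l', s). D' l' s Cycle} = (if d = Cycle then insert (l, t) else id) {(l', s). D l' s Cycle}"
    by (cases d) (auto simp: D'_def)
  have notin: "(l, t) \<notin> {(l', s). D l' s Cycle}" using oldD tt' by fastforce
  have "finite {(l', s). D' l' s Cycle}" using fin eq by simp
  moreover have "card {(l', s). D' l' s Cycle} = num_cycles (d # ds)"
    using eq fin notin cd by (cases d) (auto simp: num_cycles_def)
  ultimately show ?case by blast
qed

theorem theorem2:
  fixes V F :: "'v set" and arr :: "'v arrival" and l0 :: 'v and t0 H :: nat
    and X :: "'v \<Rightarrow> nat \<Rightarrow> bool" and D :: "'v \<Rightarrow> nat \<Rightarrow> 'v decision \<Rightarrow> bool"
    and ds :: "'v decision list"
  assumes "finite V" and "F \<subseteq> V" and "l0 \<in> V"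
    and "\<And>l t d t'. arr l t d = Some t' \<Longrightarrow> t < t'"
    and "\<And>l t d t'. l \<in> V \<Longrightarrow> available F l d \<Longrightarrow> arr l t d = Some t' \<Longrightarrow> target l d \<in> V"
    and "dtstar_plan V F arr l0 t0 H X D"
    and "valid_seq F arr (t0 + H) l0 t0 ds"
  shows "num_cycles ds \<le> model_cycles D"
proof -
  have "\<exists>X' D'. seg V F arr l0 t0 (t0 + H) X' D' \<and> finite {(l, t). D' l t Cycle}
       \<and> card {(l, t). D' l t Cycle} = num_cycles ds"
    by (rule seg_exists[where arr=arr and V=V and F=F]) (use assms in auto)
  then obtain X' D' where s: "seg V F arr l0 t0 (t0 + H) X' D'"
    and c: "card {(l, t). D' l t Cycle} = num_cycles ds" by blast
  have "dt_model V F arr l0 t0 H X' D'" using s unfolding seg_def dt_model_def by blast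
  hence "lex_better_eq arr D D'" using assms(6) unfolding dtstar_plan_def by blast
  hence "model_cycles D' \<le> model_cycles D" unfolding lex_better_eq_def by auto
  thus ?thesis using c unfolding model_cycles_def by simp
qed

end
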